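(* Up to isomorphism, the complex exceptional Lie algebra $\mathfrak{e}_8$ has exactly two pairwise non-isomorphic $|3|$-gradings $\mathfrak{n}_{-3}\oplus\cdots\oplus\mathfrak{n}_3$: for $\Sigma=\{\alpha_2\}$ one has $\dim\mathfrak{n}_{-3}=8$, $\dim\mathfrak{n}_{-2}=28$, $\dim\mathfrak{n}_{-1}=56$; for $\Sigma=\{\alpha_7\}$ one has $\dim\mathfrak{n}_{-3}=2$, $\dim\mathfrak{n}_{-2}=27$, $\dim\mathfrak{n}_{-1}=54$.
   Context: Bourbaki labeling of $\mathfrak{e}_8$: Dynkin diagram the chain $\alpha_1-\alpha_3-\alpha_4-\alpha_5-\alpha_6-\alpha_7-\alpha_8$ with $\alpha_2$ attached to $\alpha_4$; highest root $2\alpha_1+3\alpha_2+4\alpha_3+6\alpha_4+5\alpha_5+4\alpha_6+3\alpha_7+2\alpha_8$. For a root $\alpha=\sum a_l\alpha_l$ and a subset $\Sigma$ of simple roots, $ht_\Sigma(\alpha)=\sum_{\alpha_l\in\Sigma}a_l$; the grading associated to $\Sigma$ is $\mathfrak{n}_m=\bigoplus_{ht_\Sigma(\alpha)=m}\mathfrak{g}_\alpha$ ($m\ne0$), $\mathfrak{n}_0=\mathfrak{h}\oplus\bigoplus_{ht_\Sigma(\alpha)=0}\mathfrak{g}_\alpha$. The $|3|$-gradings are those associated to subsets $\Sigma$ for which the highest root has $\Sigma$-height exactly $3$; isomorphism of gradings means isomorphism of graded Lie algebras. *)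

theory Defs
  imports Main
begin

text \<open>Root system of e8, Bourbaki labeling. A root is represented by its list of
coefficients [a1,...,a8] w.r.t. the simple roots alpha_1..alpha_8 (index l stored at
position l-1).\<close>

definition e8_edges :: "(nat \<times> nat) set" where
  "e8_edges = {(1,3),(3,4),(4,5),(5,6),(6,7),(7,8),(2,4)}"

definition e8_cartan :: "nat \<Rightarrow> nat \<Rightarrow> int" where
  "e8_cartan i j = (if i = j then 2
                    else if (i,j) \<in> e8_edges \<or> (j,i) \<in> e8_edges then -1 else 0)"

definition e8_simple :: "nat \<Rightarrow> int list" where
  "e8_simple l = map (\<lambda>j. if j = l then 1 else 0) [1..<9]"

definition e8_pair :: "int list \<Rightarrow> nat \<Rightarrow> int" where
  "e8_pair a l = (\<Sum>j\<in>{1..8}. a ! (j - 1) * e8_cartan j l)"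

definition e8_refl :: "nat \<Rightarrow> int list \<Rightarrow> int list" where
  "e8_refl l a = map2 (\<lambda>x y. x - e8_pair a l * y) a (e8_simple l)"

text \<open>Positive roots: generated from the simple roots by simple reflections
(s_l permutes the positive roots other than alpha_l).\<close>
inductive e8_pos_root :: "int list \<Rightarrow> bool" where
  simple: "l \<in> {1..8} \<Longrightarrow> e8_pos_root (e8_simple l)"
| refl: "e8_pos_root a \<Longrightarrow> l \<in> {1..8} \<Longrightarrow> a \<noteq> e8_simple l \<Longrightarrow> e8_pos_root (e8_refl l a)"

definition e8_roots :: "int list set" where
  "e8_roots = {a. e8_pos_root a} \<union> {map uminus a | a. e8_pos_root a}"

definition e8_highest_root :: "int list" where
  "e8_highest_root = [2,3,4,6,5,4,3,2]"

definition ht :: "nat set \<Rightarrow> int list \<Rightarrow> int" where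
  "ht \<Sigma> a = (\<Sum>l\<in>\<Sigma>. a ! (l - 1))"

text \<open>dim n_m (m nonzero) = number of roots of Sigma-height m.\<close>
definition grading_dim :: "nat set \<Rightarrow> int \<Rightarrow> nat" where
  "grading_dim \<Sigma> m = card {a \<in> e8_roots. ht \<Sigma> a = m}"

definition is_3_grading :: "nat set \<Rightarrow> bool" where
  "is_3_grading \<Sigma> \<longleftrightarrow> \<Sigma> \<subseteq> {1..8} \<and> ht \<Sigma> e8_highest_root = 3"

end

theory Submission
  imports Defs
begin

definition R :: "int list list" where "R = [[1,0,0,0,0,0,0,0], [0,1,0,0,0,0,0,0], [0,0,1,0,0,0,0,0], [0,0,0,1,0,0,0,0], [0,0,0,0,1,0,0,0], [0,0,0,0,0,1,0,0], [0,0,0,0,0,0,1,0], [0,0,0,0,0,0,0,1], [1,0,1,0,0,0,0,0], [0,1,0,1,0,0,0,0], [0,0,1,1,0,0,0,0], [0,0,0,1,1,0,0,0], [0,0,0,0,1,1,0,0], [0,0,0,0,0,1,1,0], [0,0,0,0,0,0,1,1], [1,0,1,1,0,0,0,0], [0,1,1,1,0,0,0,0], [0,1,0,1,1,0,0,0], [0,0,1,1,1,0,0,0], [0,0,0,1,1,1,0,0], [0,0,0,0,1,1,1,0], [0,0,0,0,0,1,1,1], [1,1,1,1,0,0,0,0], [1,0,1,1,1,0,0,0], [0,1,1,1,1,0,0,0], [0,1,0,1,1,1,0,0], [0,0,1,1,1,1,0,0], [0,0,0,1,1,1,1,0], [0,0,0,0,1,1,1,1], [1,1,1,1,1,0,0,0],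 [1,0,1,1,1,1,0,0], [0,1,1,2,1,0,0,0], [0,1,1,1,1,1,0,0], [0,1,0,1,1,1,1,0], [0,0,1,1,1,1,1,0], [0,0,0,1,1,1,1,1], [1,1,1,2,1,0,0,0], [1,1,1,1,1,1,0,0], [1,0,1,1,1,1,1,0], [0,1,1,2,1,1,0,0], [0,1,1,1,1,1,1,0], [0,1,0,1,1,1,1,1], [0,0,1,1,1,1,1,1], [1,1,2,2,1,0,0,0], [1,1,1,2,1,1,0,0], [1,1,1,1,1,1,1,0], [1,0,1,1,1,1,1,1], [0,1,1,2,2,1,0,0], [0,1,1,2,1,1,1,0], [0,1,1,1,1,1,1,1], [1,1,2,2,1,1,0,0], [1,1,1,2,2,1,0,0], [1,1,1,2,1,1,1,0], [1,1,1,1,1,1,1,1], [0,1,1,2,2,1,1,0], [0,1,1,2,1,1,1,1], [1,1,2,2,2,1,0,0], [1,1,2,2,1,1,1,0], [1,1,1,2,2,1,1,0], [1,1,1,2,1,1,1,1], [0,1,1,2,2,2,1,0], [0,1,1,2,2,1,1,1], [1,1,2,3,2,1,0,0], [1,1,2,2,2,1,1,0], [1,1,2,2,1,1,1,1], [1,1,1,2,2,2,1,0], [1,1,1,2,2,1,1,1], [0,1,1,2,2,2,1,1], [1,2,2,3,2,1,0,0], [1,1,2,3,2,1,1,0], [1,1,2,2,2,2,1,0], [1,1,2,2,2,1,1,1], [1,1,1,2,2,2,1,1], [0,1,1,2,2,2,2,1], [1,2,2,3,2,1,1,0], [1,1,2,3,2,2,1,0], [1,1,2,3,2,1,1,1],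 [1,1,2,2,2,2,1,1], [1,1,1,2,2,2,2,1], [1,2,2,3,2,2,1,0], [1,2,2,3,2,1,1,1], [1,1,2,3,3,2,1,0], [1,1,2,3,2,2,1,1], [1,1,2,2,2,2,2,1], [1,2,2,3,3,2,1,0], [1,2,2,3,2,2,1,1], [1,1,2,3,3,2,1,1], [1,1,2,3,2,2,2,1], [1,2,2,4,3,2,1,0], [1,2,2,3,3,2,1,1], [1,2,2,3,2,2,2,1], [1,1,2,3,3,2,2,1], [1,2,3,4,3,2,1,0], [1,2,2,4,3,2,1,1], [1,2,2,3,3,2,2,1], [1,1,2,3,3,3,2,1], [2,2,3,4,3,2,1,0], [1,2,3,4,3,2,1,1], [1,2,2,4,3,2,2,1], [1,2,2,3,3,3,2,1], [2,2,3,4,3,2,1,1], [1,2,3,4,3,2,2,1], [1,2,2,4,3,3,2,1], [2,2,3,4,3,2,2,1], [1,2,3,4,3,3,2,1], [1,2,2,4,4,3,2,1], [2,2,3,4,3,3,2,1], [1,2,3,4,4,3,2,1], [2,2,3,4,4,3,2,1], [1,2,3,5,4,3,2,1], [2,2,3,5,4,3,2,1], [1,3,3,5,4,3,2,1], [2,3,3,5,4,3,2,1], [2,2,4,5,4,3,2,1], [2,3,4,5,4,3,2,1], [2,3,4,6,4,3,2,1], [2,3,4,6,5,3,2,1], [2,3,4,6,5,4,2,1], [2,3,4,6,5,4,3,1], [2,3,4,6,5,4,3,2]]"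

definition nbr :: "nat \<Rightarrow> nat list" where
 "nbr l = (if l = 1 then [3] else if l = 2 then [4] else if l = 3 then [1,4] else if l = 4 then [2,3,5]
   else if l = 5 then [4,6] else if l = 6 then [5,7] else if l = 7 then [6,8] else [7])"
definition refl8 :: "nat \<Rightarrow> int list \<Rightarrow> int list" where
 "refl8 l a = a[l-1 := sum_list (map (\<lambda>j. a!(j-1)) (nbr l)) - a!(l-1)]"
lemma refl8_eq: assumes "length a = 8" "l \<in> {1..8}" shows "e8_refl l a = refl8 l a"
proof -
  obtain a1 a2 a3 a4 a5 a6 a7 a8 where a: "a = [a1,a2,a3,a4,a5,a6,a7,a8]"
    using assms(1) by (auto simp: length_Suc_conv numeral_eq_Suc)
  have l: "l = 1 \<or> l = 2 \<or> l = 3 \<or> l = 4 \<or> l = 5 \<or> l = 6 \<or> l = 7 \<or> l = 8" using assms(2) by auto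
  show ?thesis using l unfolding a
    by (elim disjE) (simp_all add: e8_refl_def refl8_def nbr_def e8_pair_def e8_cartan_def e8_edges_def e8_simple_def
        upt_rec numeral_eq_Suc atLeastAtMostSuc_conv)
qed

lemma simple_eq: "e8_simple l = [if l = 1 then 1 else 0, if l = 2 then 1 else 0, if l = 3 then 1 else 0,
  if l = 4 then 1 else 0, if l = 5 then 1 else 0, if l = 6 then 1 else 0, if l = 7 then 1 else 0, if l = 8 then 1 else 0]"
  by (simp add: e8_simple_def upt_rec)


lemma step: "e8_pos_root b \<Longrightarrow> l \<in> {1..8} \<Longrightarrow> length b = 8 \<Longrightarrow> b \<noteq> e8_simple l
  \<Longrightarrow> refl8 l b = a \<Longrightarrow> e8_pos_root a"
  using refl8_eq e8_pos_root.refl by metis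

lemma p0: "e8_pos_root [1,0,0,0,0,0,0,0]"
  using e8_pos_root.simple[of 1] by (simp add: simple_eq)
lemma p1: "e8_pos_root [0,1,0,0,0,0,0,0]"
  using e8_pos_root.simple[of 2] by (simp add: simple_eq)
lemma p2: "e8_pos_root [0,0,1,0,0,0,0,0]"
  using e8_pos_root.simple[of 3] by (simp add: simple_eq)
lemma p3: "e8_pos_root [0,0,0,1,0,0,0,0]"
  using e8_pos_root.simple[of 4] by (simp add: simple_eq)
lemma p4: "e8_pos_root [0,0,0,0,1,0,0,0]"
  using e8_pos_root.simple[of 5] by (simp add: simple_eq)
lemma p5: "e8_pos_root [0,0,0,0,0,1,0,0]"
  using e8_pos_root.simple[of 6] by (simp add: simple_eq)
lemma p6: "e8_pos_root [0,0,0,0,0,0,1,0]"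
  using e8_pos_root.simple[of 7] by (simp add: simple_eq)
lemma p7: "e8_pos_root [0,0,0,0,0,0,0,1]"
  using e8_pos_root.simple[of 8] by (simp add: simple_eq)
lemma p8: "e8_pos_root [1,0,1,0,0,0,0,0]"
  by (rule step[OF p0, of 3]) (simp_all add: simple_eq refl8_def nbr_def)
lemma p9: "e8_pos_root [0,1,0,1,0,0,0,0]"
  by (rule step[OF p1, of 4]) (simp_all add: simple_eq refl8_def nbr_def)
lemma p10: "e8_pos_root [0,0,1,1,0,0,0,0]"
  by (rule step[OF p2, of 4]) (simp_all add: simple_eq refl8_def nbr_def)
lemma p11: "e8_pos_root [0,0,0,1,1,0,0,0]"
  by (rule step[OF p3, of 5]) (simp_all add: simple_eq refl8_def nbr_def)
lemma p12: "e8_pos_root [0,0,0,0,1,1,0,0]"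
  by (rule step[OF p4, of 6]) (simp_all add: simple_eq refl8_def nbr_def)
lemma p13: "e8_pos_root [0,0,0,0,0,1,1,0]"
  by (rule step[OF p5, of 7]) (simp_all add: simple_eq refl8_def nbr_def)
lemma p14: "e8_pos_root [0,0,0,0,0,0,1,1]"
  by (rule step[OF p6, of 8]) (simp_all add: simple_eq refl8_def nbr_def)
lemma p15: "e8_pos_root [1,0,1,1,0,0,0,0]"
  by (rule step[OF p8, of 4]) (simp_all add: simple_eq refl8_def nbr_def)
lemma p16: "e8_pos_root [0,1,1,1,0,0,0,0]"
  by (rule step[OF p9, of 3]) (simp_all add: simple_eq refl8_def nbr_def)
lemma p17: "e8_pos_root [0,1,0,1,1,0,0,0]"
  by (rule step[OF p9, of 5]) (simp_all add: simple_eq refl8_def nbr_def)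
lemma p18: "e8_pos_root [0,0,1,1,1,0,0,0]"
  by (rule step[OF p10, of 5]) (simp_all add: simple_eq refl8_def nbr_def)
lemma p19: "e8_pos_root [0,0,0,1,1,1,0,0]"
  by (rule step[OF p11, of 6]) (simp_all add: simple_eq refl8_def nbr_def)
lemma p20: "e8_pos_root [0,0,0,0,1,1,1,0]"
  by (rule step[OF p12, of 7]) (simp_all add: simple_eq refl8_def nbr_def)
lemma p21: "e8_pos_root [0,0,0,0,0,1,1,1]"
  by (rule step[OF p13, of 8]) (simp_all add: simple_eq refl8_def nbr_def)
lemma p22: "e8_pos_root [1,1,1,1,0,0,0,0]"
  by (rule step[OF p15, of 2]) (simp_all add: simple_eq refl8_def nbr_def)
lemma p23: "e8_pos_root [1,0,1,1,1,0,0,0]"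
  by (rule step[OF p15, of 5]) (simp_all add: simple_eq refl8_def nbr_def)
lemma p24: "e8_pos_root [0,1,1,1,1,0,0,0]"
  by (rule step[OF p16, of 5]) (simp_all add: simple_eq refl8_def nbr_def)
lemma p25: "e8_pos_root [0,1,0,1,1,1,0,0]"
  by (rule step[OF p17, of 6]) (simp_all add: simple_eq refl8_def nbr_def)
lemma p26: "e8_pos_root [0,0,1,1,1,1,0,0]"
  by (rule step[OF p18, of 6]) (simp_all add: simple_eq refl8_def nbr_def)
lemma p27: "e8_pos_root [0,0,0,1,1,1,1,0]"
  by (rule step[OF p19, of 7]) (simp_all add: simple_eq refl8_def nbr_def)
lemma p28: "e8_pos_root [0,0,0,0,1,1,1,1]"
  by (rule step[OF p20, of 8]) (simp_all add: simple_eq refl8_def nbr_def)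
lemma p29: "e8_pos_root [1,1,1,1,1,0,0,0]"
  by (rule step[OF p22, of 5]) (simp_all add: simple_eq refl8_def nbr_def)
lemma p30: "e8_pos_root [1,0,1,1,1,1,0,0]"
  by (rule step[OF p23, of 6]) (simp_all add: simple_eq refl8_def nbr_def)
lemma p31: "e8_pos_root [0,1,1,2,1,0,0,0]"
  by (rule step[OF p24, of 4]) (simp_all add: simple_eq refl8_def nbr_def)
lemma p32: "e8_pos_root [0,1,1,1,1,1,0,0]"
  by (rule step[OF p24, of 6]) (simp_all add: simple_eq refl8_def nbr_def)
lemma p33: "e8_pos_root [0,1,0,1,1,1,1,0]"
  by (rule step[OF p25, of 7]) (simp_all add: simple_eq refl8_def nbr_def)
lemma p34: "e8_pos_root [0,0,1,1,1,1,1,0]"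
  by (rule step[OF p26, of 7]) (simp_all add: simple_eq refl8_def nbr_def)
lemma p35: "e8_pos_root [0,0,0,1,1,1,1,1]"
  by (rule step[OF p27, of 8]) (simp_all add: simple_eq refl8_def nbr_def)
lemma p36: "e8_pos_root [1,1,1,2,1,0,0,0]"
  by (rule step[OF p29, of 4]) (simp_all add: simple_eq refl8_def nbr_def)
lemma p37: "e8_pos_root [1,1,1,1,1,1,0,0]"
  by (rule step[OF p29, of 6]) (simp_all add: simple_eq refl8_def nbr_def)
lemma p38: "e8_pos_root [1,0,1,1,1,1,1,0]"
  by (rule step[OF p30, of 7]) (simp_all add: simple_eq refl8_def nbr_def)
lemma p39: "e8_pos_root [0,1,1,2,1,1,0,0]"
  by (rule step[OF p31, of 6]) (simp_all add: simple_eq refl8_def nbr_def)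
lemma p40: "e8_pos_root [0,1,1,1,1,1,1,0]"
  by (rule step[OF p32, of 7]) (simp_all add: simple_eq refl8_def nbr_def)
lemma p41: "e8_pos_root [0,1,0,1,1,1,1,1]"
  by (rule step[OF p33, of 8]) (simp_all add: simple_eq refl8_def nbr_def)
lemma p42: "e8_pos_root [0,0,1,1,1,1,1,1]"
  by (rule step[OF p34, of 8]) (simp_all add: simple_eq refl8_def nbr_def)
lemma p43: "e8_pos_root [1,1,2,2,1,0,0,0]"
  by (rule step[OF p36, of 3]) (simp_all add: simple_eq refl8_def nbr_def)
lemma p44: "e8_pos_root [1,1,1,2,1,1,0,0]"
  by (rule step[OF p36, of 6]) (simp_all add: simple_eq refl8_def nbr_def)
lemma p45: "e8_pos_root [1,1,1,1,1,1,1,0]"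
  by (rule step[OF p37, of 7]) (simp_all add: simple_eq refl8_def nbr_def)
lemma p46: "e8_pos_root [1,0,1,1,1,1,1,1]"
  by (rule step[OF p38, of 8]) (simp_all add: simple_eq refl8_def nbr_def)
lemma p47: "e8_pos_root [0,1,1,2,2,1,0,0]"
  by (rule step[OF p39, of 5]) (simp_all add: simple_eq refl8_def nbr_def)
lemma p48: "e8_pos_root [0,1,1,2,1,1,1,0]"
  by (rule step[OF p39, of 7]) (simp_all add: simple_eq refl8_def nbr_def)
lemma p49: "e8_pos_root [0,1,1,1,1,1,1,1]"
  by (rule step[OF p40, of 8]) (simp_all add: simple_eq refl8_def nbr_def)
lemma p50: "e8_pos_root [1,1,2,2,1,1,0,0]"
  by (rule step[OF p43, of 6]) (simp_all add: simple_eq refl8_def nbr_def)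
lemma p51: "e8_pos_root [1,1,1,2,2,1,0,0]"
  by (rule step[OF p44, of 5]) (simp_all add: simple_eq refl8_def nbr_def)
lemma p52: "e8_pos_root [1,1,1,2,1,1,1,0]"
  by (rule step[OF p44, of 7]) (simp_all add: simple_eq refl8_def nbr_def)
lemma p53: "e8_pos_root [1,1,1,1,1,1,1,1]"
  by (rule step[OF p45, of 8]) (simp_all add: simple_eq refl8_def nbr_def)
lemma p54: "e8_pos_root [0,1,1,2,2,1,1,0]"
  by (rule step[OF p47, of 7]) (simp_all add: simple_eq refl8_def nbr_def)
lemma p55: "e8_pos_root [0,1,1,2,1,1,1,1]"
  by (rule step[OF p48, of 8]) (simp_all add: simple_eq refl8_def nbr_def)
lemma p56: "e8_pos_root [1,1,2,2,2,1,0,0]"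
  by (rule step[OF p50, of 5]) (simp_all add: simple_eq refl8_def nbr_def)
lemma p57: "e8_pos_root [1,1,2,2,1,1,1,0]"
  by (rule step[OF p50, of 7]) (simp_all add: simple_eq refl8_def nbr_def)
lemma p58: "e8_pos_root [1,1,1,2,2,1,1,0]"
  by (rule step[OF p51, of 7]) (simp_all add: simple_eq refl8_def nbr_def)
lemma p59: "e8_pos_root [1,1,1,2,1,1,1,1]"
  by (rule step[OF p52, of 8]) (simp_all add: simple_eq refl8_def nbr_def)
lemma p60: "e8_pos_root [0,1,1,2,2,2,1,0]"
  by (rule step[OF p54, of 6]) (simp_all add: simple_eq refl8_def nbr_def)
lemma p61: "e8_pos_root [0,1,1,2,2,1,1,1]"
  by (rule step[OF p54, of 8]) (simp_all add: simple_eq refl8_def nbr_def)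
lemma p62: "e8_pos_root [1,1,2,3,2,1,0,0]"
  by (rule step[OF p56, of 4]) (simp_all add: simple_eq refl8_def nbr_def)
lemma p63: "e8_pos_root [1,1,2,2,2,1,1,0]"
  by (rule step[OF p56, of 7]) (simp_all add: simple_eq refl8_def nbr_def)
lemma p64: "e8_pos_root [1,1,2,2,1,1,1,1]"
  by (rule step[OF p57, of 8]) (simp_all add: simple_eq refl8_def nbr_def)
lemma p65: "e8_pos_root [1,1,1,2,2,2,1,0]"
  by (rule step[OF p58, of 6]) (simp_all add: simple_eq refl8_def nbr_def)
lemma p66: "e8_pos_root [1,1,1,2,2,1,1,1]"
  by (rule step[OF p58, of 8]) (simp_all add: simple_eq refl8_def nbr_def)
lemma p67: "e8_pos_root [0,1,1,2,2,2,1,1]"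
  by (rule step[OF p60, of 8]) (simp_all add: simple_eq refl8_def nbr_def)
lemma p68: "e8_pos_root [1,2,2,3,2,1,0,0]"
  by (rule step[OF p62, of 2]) (simp_all add: simple_eq refl8_def nbr_def)
lemma p69: "e8_pos_root [1,1,2,3,2,1,1,0]"
  by (rule step[OF p62, of 7]) (simp_all add: simple_eq refl8_def nbr_def)
lemma p70: "e8_pos_root [1,1,2,2,2,2,1,0]"
  by (rule step[OF p63, of 6]) (simp_all add: simple_eq refl8_def nbr_def)
lemma p71: "e8_pos_root [1,1,2,2,2,1,1,1]"
  by (rule step[OF p63, of 8]) (simp_all add: simple_eq refl8_def nbr_def)
lemma p72: "e8_pos_root [1,1,1,2,2,2,1,1]"
  by (rule step[OF p65, of 8]) (simp_all add: simple_eq refl8_def nbr_def)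
lemma p73: "e8_pos_root [0,1,1,2,2,2,2,1]"
  by (rule step[OF p67, of 7]) (simp_all add: simple_eq refl8_def nbr_def)
lemma p74: "e8_pos_root [1,2,2,3,2,1,1,0]"
  by (rule step[OF p68, of 7]) (simp_all add: simple_eq refl8_def nbr_def)
lemma p75: "e8_pos_root [1,1,2,3,2,2,1,0]"
  by (rule step[OF p69, of 6]) (simp_all add: simple_eq refl8_def nbr_def)
lemma p76: "e8_pos_root [1,1,2,3,2,1,1,1]"
  by (rule step[OF p69, of 8]) (simp_all add: simple_eq refl8_def nbr_def)
lemma p77: "e8_pos_root [1,1,2,2,2,2,1,1]"
  by (rule step[OF p70, of 8]) (simp_all add: simple_eq refl8_def nbr_def)
lemma p78: "e8_pos_root [1,1,1,2,2,2,2,1]"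
  by (rule step[OF p72, of 7]) (simp_all add: simple_eq refl8_def nbr_def)
lemma p79: "e8_pos_root [1,2,2,3,2,2,1,0]"
  by (rule step[OF p74, of 6]) (simp_all add: simple_eq refl8_def nbr_def)
lemma p80: "e8_pos_root [1,2,2,3,2,1,1,1]"
  by (rule step[OF p74, of 8]) (simp_all add: simple_eq refl8_def nbr_def)
lemma p81: "e8_pos_root [1,1,2,3,3,2,1,0]"
  by (rule step[OF p75, of 5]) (simp_all add: simple_eq refl8_def nbr_def)
lemma p82: "e8_pos_root [1,1,2,3,2,2,1,1]"
  by (rule step[OF p75, of 8]) (simp_all add: simple_eq refl8_def nbr_def)
lemma p83: "e8_pos_root [1,1,2,2,2,2,2,1]"
  by (rule step[OF p77, of 7]) (simp_all add: simple_eq refl8_def nbr_def)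
lemma p84: "e8_pos_root [1,2,2,3,3,2,1,0]"
  by (rule step[OF p79, of 5]) (simp_all add: simple_eq refl8_def nbr_def)
lemma p85: "e8_pos_root [1,2,2,3,2,2,1,1]"
  by (rule step[OF p79, of 8]) (simp_all add: simple_eq refl8_def nbr_def)
lemma p86: "e8_pos_root [1,1,2,3,3,2,1,1]"
  by (rule step[OF p81, of 8]) (simp_all add: simple_eq refl8_def nbr_def)
lemma p87: "e8_pos_root [1,1,2,3,2,2,2,1]"
  by (rule step[OF p82, of 7]) (simp_all add: simple_eq refl8_def nbr_def)
lemma p88: "e8_pos_root [1,2,2,4,3,2,1,0]"
  by (rule step[OF p84, of 4]) (simp_all add: simple_eq refl8_def nbr_def)
lemma p89: "e8_pos_root [1,2,2,3,3,2,1,1]"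
  by (rule step[OF p84, of 8]) (simp_all add: simple_eq refl8_def nbr_def)
lemma p90: "e8_pos_root [1,2,2,3,2,2,2,1]"
  by (rule step[OF p85, of 7]) (simp_all add: simple_eq refl8_def nbr_def)
lemma p91: "e8_pos_root [1,1,2,3,3,2,2,1]"
  by (rule step[OF p86, of 7]) (simp_all add: simple_eq refl8_def nbr_def)
lemma p92: "e8_pos_root [1,2,3,4,3,2,1,0]"
  by (rule step[OF p88, of 3]) (simp_all add: simple_eq refl8_def nbr_def)
lemma p93: "e8_pos_root [1,2,2,4,3,2,1,1]"
  by (rule step[OF p88, of 8]) (simp_all add: simple_eq refl8_def nbr_def)
lemma p94: "e8_pos_root [1,2,2,3,3,2,2,1]"
  by (rule step[OF p89, of 7]) (simp_all add: simple_eq refl8_def nbr_def)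
lemma p95: "e8_pos_root [1,1,2,3,3,3,2,1]"
  by (rule step[OF p91, of 6]) (simp_all add: simple_eq refl8_def nbr_def)
lemma p96: "e8_pos_root [2,2,3,4,3,2,1,0]"
  by (rule step[OF p92, of 1]) (simp_all add: simple_eq refl8_def nbr_def)
lemma p97: "e8_pos_root [1,2,3,4,3,2,1,1]"
  by (rule step[OF p92, of 8]) (simp_all add: simple_eq refl8_def nbr_def)
lemma p98: "e8_pos_root [1,2,2,4,3,2,2,1]"
  by (rule step[OF p93, of 7]) (simp_all add: simple_eq refl8_def nbr_def)
lemma p99: "e8_pos_root [1,2,2,3,3,3,2,1]"
  by (rule step[OF p94, of 6]) (simp_all add: simple_eq refl8_def nbr_def)
lemma p100: "e8_pos_root [2,2,3,4,3,2,1,1]"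
  by (rule step[OF p96, of 8]) (simp_all add: simple_eq refl8_def nbr_def)
lemma p101: "e8_pos_root [1,2,3,4,3,2,2,1]"
  by (rule step[OF p97, of 7]) (simp_all add: simple_eq refl8_def nbr_def)
lemma p102: "e8_pos_root [1,2,2,4,3,3,2,1]"
  by (rule step[OF p98, of 6]) (simp_all add: simple_eq refl8_def nbr_def)
lemma p103: "e8_pos_root [2,2,3,4,3,2,2,1]"
  by (rule step[OF p100, of 7]) (simp_all add: simple_eq refl8_def nbr_def)
lemma p104: "e8_pos_root [1,2,3,4,3,3,2,1]"
  by (rule step[OF p101, of 6]) (simp_all add: simple_eq refl8_def nbr_def)
lemma p105: "e8_pos_root [1,2,2,4,4,3,2,1]"
  by (rule step[OF p102, of 5]) (simp_all add: simple_eq refl8_def nbr_def)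
lemma p106: "e8_pos_root [2,2,3,4,3,3,2,1]"
  by (rule step[OF p103, of 6]) (simp_all add: simple_eq refl8_def nbr_def)
lemma p107: "e8_pos_root [1,2,3,4,4,3,2,1]"
  by (rule step[OF p104, of 5]) (simp_all add: simple_eq refl8_def nbr_def)
lemma p108: "e8_pos_root [2,2,3,4,4,3,2,1]"
  by (rule step[OF p106, of 5]) (simp_all add: simple_eq refl8_def nbr_def)
lemma p109: "e8_pos_root [1,2,3,5,4,3,2,1]"
  by (rule step[OF p107, of 4]) (simp_all add: simple_eq refl8_def nbr_def)
lemma p110: "e8_pos_root [2,2,3,5,4,3,2,1]"
  by (rule step[OF p108, of 4]) (simp_all add: simple_eq refl8_def nbr_def)
lemma p111: "e8_pos_root [1,3,3,5,4,3,2,1]"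
  by (rule step[OF p109, of 2]) (simp_all add: simple_eq refl8_def nbr_def)
lemma p112: "e8_pos_root [2,3,3,5,4,3,2,1]"
  by (rule step[OF p110, of 2]) (simp_all add: simple_eq refl8_def nbr_def)
lemma p113: "e8_pos_root [2,2,4,5,4,3,2,1]"
  by (rule step[OF p110, of 3]) (simp_all add: simple_eq refl8_def nbr_def)
lemma p114: "e8_pos_root [2,3,4,5,4,3,2,1]"
  by (rule step[OF p112, of 3]) (simp_all add: simple_eq refl8_def nbr_def)
lemma p115: "e8_pos_root [2,3,4,6,4,3,2,1]"
  by (rule step[OF p114, of 4]) (simp_all add: simple_eq refl8_def nbr_def)
lemma p116: "e8_pos_root [2,3,4,6,5,3,2,1]"
  by (rule step[OF p115, of 5]) (simp_all add: simple_eq refl8_def nbr_def)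
lemma p117: "e8_pos_root [2,3,4,6,5,4,2,1]"
  by (rule step[OF p116, of 6]) (simp_all add: simple_eq refl8_def nbr_def)
lemma p118: "e8_pos_root [2,3,4,6,5,4,3,1]"
  by (rule step[OF p117, of 7]) (simp_all add: simple_eq refl8_def nbr_def)
lemma p119: "e8_pos_root [2,3,4,6,5,4,3,2]"
  by (rule step[OF p118, of 8]) (simp_all add: simple_eq refl8_def nbr_def)

definition closedR :: "int list \<Rightarrow> bool" where
  "closedR a = ((a = e8_simple 1 \<or> refl8 1 a \<in> set R) \<and> (a = e8_simple 2 \<or> refl8 2 a \<in> set R) \<and> (a = e8_simple 3 \<or> refl8 3 a \<in> set R) \<and> (a = e8_simple 4 \<or> refl8 4 a \<in> set R) \<and> (a = e8_simple 5 \<or> refl8 5 a \<in> set R) \<and> (a = e8_simple 6 \<or> refl8 6 a \<in> set R) \<and> (a = e8_simple 7 \<or> refl8 7 a \<in> set R) \<and> (a = e8_simple 8 \<or> refl8 8 a \<in> set R))"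

lemma c0: "closedR [1,0,0,0,0,0,0,0]"
  unfolding closedR_def by (simp add: simple_eq refl8_def nbr_def, simp add: R_def)
lemma c1: "closedR [0,1,0,0,0,0,0,0]"
  unfolding closedR_def by (simp add: simple_eq refl8_def nbr_def, simp add: R_def)
lemma c2: "closedR [0,0,1,0,0,0,0,0]"
  unfolding closedR_def by (simp add: simple_eq refl8_def nbr_def, simp add: R_def)
lemma c3: "closedR [0,0,0,1,0,0,0,0]"
  unfolding closedR_def by (simp add: simple_eq refl8_def nbr_def, simp add: R_def)
lemma c4: "closedR [0,0,0,0,1,0,0,0]"
  unfolding closedR_def by (simp add: simple_eq refl8_def nbr_def, simp add: R_def)
lemma c5: "closedR [0,0,0,0,0,1,0,0]"
  unfolding closedR_def by (simp add: simple_eq refl8_def nbr_def, simp add: R_def)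
lemma c6: "closedR [0,0,0,0,0,0,1,0]"
  unfolding closedR_def by (simp add: simple_eq refl8_def nbr_def, simp add: R_def)
lemma c7: "closedR [0,0,0,0,0,0,0,1]"
  unfolding closedR_def by (simp add: simple_eq refl8_def nbr_def, simp add: R_def)
lemma c8: "closedR [1,0,1,0,0,0,0,0]"
  unfolding closedR_def by (simp add: simple_eq refl8_def nbr_def, simp add: R_def)
lemma c9: "closedR [0,1,0,1,0,0,0,0]"
  unfolding closedR_def by (simp add: simple_eq refl8_def nbr_def, simp add: R_def)
lemma c10: "closedR [0,0,1,1,0,0,0,0]"
  unfolding closedR_def by (simp add: simple_eq refl8_def nbr_def, simp add: R_def)
lemma c11: "closedR [0,0,0,1,1,0,0,0]"
  unfolding closedR_def by (simp add: simple_eq refl8_def nbr_def, simp add: R_def)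
lemma c12: "closedR [0,0,0,0,1,1,0,0]"
  unfolding closedR_def by (simp add: simple_eq refl8_def nbr_def, simp add: R_def)
lemma c13: "closedR [0,0,0,0,0,1,1,0]"
  unfolding closedR_def by (simp add: simple_eq refl8_def nbr_def, simp add: R_def)
lemma c14: "closedR [0,0,0,0,0,0,1,1]"
  unfolding closedR_def by (simp add: simple_eq refl8_def nbr_def, simp add: R_def)
lemma c15: "closedR [1,0,1,1,0,0,0,0]"
  unfolding closedR_def by (simp add: simple_eq refl8_def nbr_def, simp add: R_def)
lemma c16: "closedR [0,1,1,1,0,0,0,0]"
  unfolding closedR_def by (simp add: simple_eq refl8_def nbr_def, simp add: R_def)
lemma c17: "closedR [0,1,0,1,1,0,0,0]"
  unfolding closedR_def by (simp add: simple_eq refl8_def nbr_def, simp add: R_def)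
lemma c18: "closedR [0,0,1,1,1,0,0,0]"
  unfolding closedR_def by (simp add: simple_eq refl8_def nbr_def, simp add: R_def)
lemma c19: "closedR [0,0,0,1,1,1,0,0]"
  unfolding closedR_def by (simp add: simple_eq refl8_def nbr_def, simp add: R_def)
lemma c20: "closedR [0,0,0,0,1,1,1,0]"
  unfolding closedR_def by (simp add: simple_eq refl8_def nbr_def, simp add: R_def)
lemma c21: "closedR [0,0,0,0,0,1,1,1]"
  unfolding closedR_def by (simp add: simple_eq refl8_def nbr_def, simp add: R_def)
lemma c22: "closedR [1,1,1,1,0,0,0,0]"
  unfolding closedR_def by (simp add: simple_eq refl8_def nbr_def, simp add: R_def)
lemma c23: "closedR [1,0,1,1,1,0,0,0]"
  unfolding closedR_def by (simp add: simple_eq refl8_def nbr_def, simp add: R_def)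
lemma c24: "closedR [0,1,1,1,1,0,0,0]"
  unfolding closedR_def by (simp add: simple_eq refl8_def nbr_def, simp add: R_def)
lemma c25: "closedR [0,1,0,1,1,1,0,0]"
  unfolding closedR_def by (simp add: simple_eq refl8_def nbr_def, simp add: R_def)
lemma c26: "closedR [0,0,1,1,1,1,0,0]"
  unfolding closedR_def by (simp add: simple_eq refl8_def nbr_def, simp add: R_def)
lemma c27: "closedR [0,0,0,1,1,1,1,0]"
  unfolding closedR_def by (simp add: simple_eq refl8_def nbr_def, simp add: R_def)
lemma c28: "closedR [0,0,0,0,1,1,1,1]"
  unfolding closedR_def by (simp add: simple_eq refl8_def nbr_def, simp add: R_def)
lemma c29: "closedR [1,1,1,1,1,0,0,0]"
  unfolding closedR_def by (simp add: simple_eq refl8_def nbr_def, simp add: R_def)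
lemma c30: "closedR [1,0,1,1,1,1,0,0]"
  unfolding closedR_def by (simp add: simple_eq refl8_def nbr_def, simp add: R_def)
lemma c31: "closedR [0,1,1,2,1,0,0,0]"
  unfolding closedR_def by (simp add: simple_eq refl8_def nbr_def, simp add: R_def)
lemma c32: "closedR [0,1,1,1,1,1,0,0]"
  unfolding closedR_def by (simp add: simple_eq refl8_def nbr_def, simp add: R_def)
lemma c33: "closedR [0,1,0,1,1,1,1,0]"
  unfolding closedR_def by (simp add: simple_eq refl8_def nbr_def, simp add: R_def)
lemma c34: "closedR [0,0,1,1,1,1,1,0]"
  unfolding closedR_def by (simp add: simple_eq refl8_def nbr_def, simp add: R_def)
lemma c35: "closedR [0,0,0,1,1,1,1,1]"
  unfolding closedR_def by (simp add: simple_eq refl8_def nbr_def, simp add: R_def)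
lemma c36: "closedR [1,1,1,2,1,0,0,0]"
  unfolding closedR_def by (simp add: simple_eq refl8_def nbr_def, simp add: R_def)
lemma c37: "closedR [1,1,1,1,1,1,0,0]"
  unfolding closedR_def by (simp add: simple_eq refl8_def nbr_def, simp add: R_def)
lemma c38: "closedR [1,0,1,1,1,1,1,0]"
  unfolding closedR_def by (simp add: simple_eq refl8_def nbr_def, simp add: R_def)
lemma c39: "closedR [0,1,1,2,1,1,0,0]"
  unfolding closedR_def by (simp add: simple_eq refl8_def nbr_def, simp add: R_def)
lemma c40: "closedR [0,1,1,1,1,1,1,0]"
  unfolding closedR_def by (simp add: simple_eq refl8_def nbr_def, simp add: R_def)
lemma c41: "closedR [0,1,0,1,1,1,1,1]"
  unfolding closedR_def by (simp add: simple_eq refl8_def nbr_def, simp add: R_def)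
lemma c42: "closedR [0,0,1,1,1,1,1,1]"
  unfolding closedR_def by (simp add: simple_eq refl8_def nbr_def, simp add: R_def)
lemma c43: "closedR [1,1,2,2,1,0,0,0]"
  unfolding closedR_def by (simp add: simple_eq refl8_def nbr_def, simp add: R_def)
lemma c44: "closedR [1,1,1,2,1,1,0,0]"
  unfolding closedR_def by (simp add: simple_eq refl8_def nbr_def, simp add: R_def)
lemma c45: "closedR [1,1,1,1,1,1,1,0]"
  unfolding closedR_def by (simp add: simple_eq refl8_def nbr_def, simp add: R_def)
lemma c46: "closedR [1,0,1,1,1,1,1,1]"
  unfolding closedR_def by (simp add: simple_eq refl8_def nbr_def, simp add: R_def)
lemma c47: "closedR [0,1,1,2,2,1,0,0]"
  unfolding closedR_def by (simp add: simple_eq refl8_def nbr_def, simp add: R_def)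
lemma c48: "closedR [0,1,1,2,1,1,1,0]"
  unfolding closedR_def by (simp add: simple_eq refl8_def nbr_def, simp add: R_def)
lemma c49: "closedR [0,1,1,1,1,1,1,1]"
  unfolding closedR_def by (simp add: simple_eq refl8_def nbr_def, simp add: R_def)
lemma c50: "closedR [1,1,2,2,1,1,0,0]"
  unfolding closedR_def by (simp add: simple_eq refl8_def nbr_def, simp add: R_def)
lemma c51: "closedR [1,1,1,2,2,1,0,0]"
  unfolding closedR_def by (simp add: simple_eq refl8_def nbr_def, simp add: R_def)
lemma c52: "closedR [1,1,1,2,1,1,1,0]"
  unfolding closedR_def by (simp add: simple_eq refl8_def nbr_def, simp add: R_def)
lemma c53: "closedR [1,1,1,1,1,1,1,1]"
  unfolding closedR_def by (simp add: simple_eq refl8_def nbr_def, simp add: R_def)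
lemma c54: "closedR [0,1,1,2,2,1,1,0]"
  unfolding closedR_def by (simp add: simple_eq refl8_def nbr_def, simp add: R_def)
lemma c55: "closedR [0,1,1,2,1,1,1,1]"
  unfolding closedR_def by (simp add: simple_eq refl8_def nbr_def, simp add: R_def)
lemma c56: "closedR [1,1,2,2,2,1,0,0]"
  unfolding closedR_def by (simp add: simple_eq refl8_def nbr_def, simp add: R_def)
lemma c57: "closedR [1,1,2,2,1,1,1,0]"
  unfolding closedR_def by (simp add: simple_eq refl8_def nbr_def, simp add: R_def)
lemma c58: "closedR [1,1,1,2,2,1,1,0]"
  unfolding closedR_def by (simp add: simple_eq refl8_def nbr_def, simp add: R_def)
lemma c59: "closedR [1,1,1,2,1,1,1,1]"
  unfolding closedR_def by (simp add: simple_eq refl8_def nbr_def, simp add: R_def)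
lemma c60: "closedR [0,1,1,2,2,2,1,0]"
  unfolding closedR_def by (simp add: simple_eq refl8_def nbr_def, simp add: R_def)
lemma c61: "closedR [0,1,1,2,2,1,1,1]"
  unfolding closedR_def by (simp add: simple_eq refl8_def nbr_def, simp add: R_def)
lemma c62: "closedR [1,1,2,3,2,1,0,0]"
  unfolding closedR_def by (simp add: simple_eq refl8_def nbr_def, simp add: R_def)
lemma c63: "closedR [1,1,2,2,2,1,1,0]"
  unfolding closedR_def by (simp add: simple_eq refl8_def nbr_def, simp add: R_def)
lemma c64: "closedR [1,1,2,2,1,1,1,1]"
  unfolding closedR_def by (simp add: simple_eq refl8_def nbr_def, simp add: R_def)
lemma c65: "closedR [1,1,1,2,2,2,1,0]"
  unfolding closedR_def by (simp add: simple_eq refl8_def nbr_def, simp add: R_def)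
lemma c66: "closedR [1,1,1,2,2,1,1,1]"
  unfolding closedR_def by (simp add: simple_eq refl8_def nbr_def, simp add: R_def)
lemma c67: "closedR [0,1,1,2,2,2,1,1]"
  unfolding closedR_def by (simp add: simple_eq refl8_def nbr_def, simp add: R_def)
lemma c68: "closedR [1,2,2,3,2,1,0,0]"
  unfolding closedR_def by (simp add: simple_eq refl8_def nbr_def, simp add: R_def)
lemma c69: "closedR [1,1,2,3,2,1,1,0]"
  unfolding closedR_def by (simp add: simple_eq refl8_def nbr_def, simp add: R_def)
lemma c70: "closedR [1,1,2,2,2,2,1,0]"
  unfolding closedR_def by (simp add: simple_eq refl8_def nbr_def, simp add: R_def)
lemma c71: "closedR [1,1,2,2,2,1,1,1]"
  unfolding closedR_def by (simp add: simple_eq refl8_def nbr_def, simp add: R_def)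
lemma c72: "closedR [1,1,1,2,2,2,1,1]"
  unfolding closedR_def by (simp add: simple_eq refl8_def nbr_def, simp add: R_def)
lemma c73: "closedR [0,1,1,2,2,2,2,1]"
  unfolding closedR_def by (simp add: simple_eq refl8_def nbr_def, simp add: R_def)
lemma c74: "closedR [1,2,2,3,2,1,1,0]"
  unfolding closedR_def by (simp add: simple_eq refl8_def nbr_def, simp add: R_def)
lemma c75: "closedR [1,1,2,3,2,2,1,0]"
  unfolding closedR_def by (simp add: simple_eq refl8_def nbr_def, simp add: R_def)
lemma c76: "closedR [1,1,2,3,2,1,1,1]"
  unfolding closedR_def by (simp add: simple_eq refl8_def nbr_def, simp add: R_def)
lemma c77: "closedR [1,1,2,2,2,2,1,1]"
  unfolding closedR_def by (simp add: simple_eq refl8_def nbr_def, simp add: R_def)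
lemma c78: "closedR [1,1,1,2,2,2,2,1]"
  unfolding closedR_def by (simp add: simple_eq refl8_def nbr_def, simp add: R_def)
lemma c79: "closedR [1,2,2,3,2,2,1,0]"
  unfolding closedR_def by (simp add: simple_eq refl8_def nbr_def, simp add: R_def)
lemma c80: "closedR [1,2,2,3,2,1,1,1]"
  unfolding closedR_def by (simp add: simple_eq refl8_def nbr_def, simp add: R_def)
lemma c81: "closedR [1,1,2,3,3,2,1,0]"
  unfolding closedR_def by (simp add: simple_eq refl8_def nbr_def, simp add: R_def)
lemma c82: "closedR [1,1,2,3,2,2,1,1]"
  unfolding closedR_def by (simp add: simple_eq refl8_def nbr_def, simp add: R_def)
lemma c83: "closedR [1,1,2,2,2,2,2,1]"
  unfolding closedR_def by (simp add: simple_eq refl8_def nbr_def, simp add: R_def)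
lemma c84: "closedR [1,2,2,3,3,2,1,0]"
  unfolding closedR_def by (simp add: simple_eq refl8_def nbr_def, simp add: R_def)
lemma c85: "closedR [1,2,2,3,2,2,1,1]"
  unfolding closedR_def by (simp add: simple_eq refl8_def nbr_def, simp add: R_def)
lemma c86: "closedR [1,1,2,3,3,2,1,1]"
  unfolding closedR_def by (simp add: simple_eq refl8_def nbr_def, simp add: R_def)
lemma c87: "closedR [1,1,2,3,2,2,2,1]"
  unfolding closedR_def by (simp add: simple_eq refl8_def nbr_def, simp add: R_def)
lemma c88: "closedR [1,2,2,4,3,2,1,0]"
  unfolding closedR_def by (simp add: simple_eq refl8_def nbr_def, simp add: R_def)
lemma c89: "closedR [1,2,2,3,3,2,1,1]"
  unfolding closedR_def by (simp add: simple_eq refl8_def nbr_def, simp add: R_def)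
lemma c90: "closedR [1,2,2,3,2,2,2,1]"
  unfolding closedR_def by (simp add: simple_eq refl8_def nbr_def, simp add: R_def)
lemma c91: "closedR [1,1,2,3,3,2,2,1]"
  unfolding closedR_def by (simp add: simple_eq refl8_def nbr_def, simp add: R_def)
lemma c92: "closedR [1,2,3,4,3,2,1,0]"
  unfolding closedR_def by (simp add: simple_eq refl8_def nbr_def, simp add: R_def)
lemma c93: "closedR [1,2,2,4,3,2,1,1]"
  unfolding closedR_def by (simp add: simple_eq refl8_def nbr_def, simp add: R_def)
lemma c94: "closedR [1,2,2,3,3,2,2,1]"
  unfolding closedR_def by (simp add: simple_eq refl8_def nbr_def, simp add: R_def)
lemma c95: "closedR [1,1,2,3,3,3,2,1]"
  unfolding closedR_def by (simp add: simple_eq refl8_def nbr_def, simp add: R_def)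
lemma c96: "closedR [2,2,3,4,3,2,1,0]"
  unfolding closedR_def by (simp add: simple_eq refl8_def nbr_def, simp add: R_def)
lemma c97: "closedR [1,2,3,4,3,2,1,1]"
  unfolding closedR_def by (simp add: simple_eq refl8_def nbr_def, simp add: R_def)
lemma c98: "closedR [1,2,2,4,3,2,2,1]"
  unfolding closedR_def by (simp add: simple_eq refl8_def nbr_def, simp add: R_def)
lemma c99: "closedR [1,2,2,3,3,3,2,1]"
  unfolding closedR_def by (simp add: simple_eq refl8_def nbr_def, simp add: R_def)
lemma c100: "closedR [2,2,3,4,3,2,1,1]"
  unfolding closedR_def by (simp add: simple_eq refl8_def nbr_def, simp add: R_def)
lemma c101: "closedR [1,2,3,4,3,2,2,1]"
  unfolding closedR_def by (simp add: simple_eq refl8_def nbr_def, simp add: R_def)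
lemma c102: "closedR [1,2,2,4,3,3,2,1]"
  unfolding closedR_def by (simp add: simple_eq refl8_def nbr_def, simp add: R_def)
lemma c103: "closedR [2,2,3,4,3,2,2,1]"
  unfolding closedR_def by (simp add: simple_eq refl8_def nbr_def, simp add: R_def)
lemma c104: "closedR [1,2,3,4,3,3,2,1]"
  unfolding closedR_def by (simp add: simple_eq refl8_def nbr_def, simp add: R_def)
lemma c105: "closedR [1,2,2,4,4,3,2,1]"
  unfolding closedR_def by (simp add: simple_eq refl8_def nbr_def, simp add: R_def)
lemma c106: "closedR [2,2,3,4,3,3,2,1]"
  unfolding closedR_def by (simp add: simple_eq refl8_def nbr_def, simp add: R_def)
lemma c107: "closedR [1,2,3,4,4,3,2,1]"
  unfolding closedR_def by (simp add: simple_eq refl8_def nbr_def, simp add: R_def)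
lemma c108: "closedR [2,2,3,4,4,3,2,1]"
  unfolding closedR_def by (simp add: simple_eq refl8_def nbr_def, simp add: R_def)
lemma c109: "closedR [1,2,3,5,4,3,2,1]"
  unfolding closedR_def by (simp add: simple_eq refl8_def nbr_def, simp add: R_def)
lemma c110: "closedR [2,2,3,5,4,3,2,1]"
  unfolding closedR_def by (simp add: simple_eq refl8_def nbr_def, simp add: R_def)
lemma c111: "closedR [1,3,3,5,4,3,2,1]"
  unfolding closedR_def by (simp add: simple_eq refl8_def nbr_def, simp add: R_def)
lemma c112: "closedR [2,3,3,5,4,3,2,1]"
  unfolding closedR_def by (simp add: simple_eq refl8_def nbr_def, simp add: R_def)
lemma c113: "closedR [2,2,4,5,4,3,2,1]"
  unfolding closedR_def by (simp add: simple_eq refl8_def nbr_def, simp add: R_def)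
lemma c114: "closedR [2,3,4,5,4,3,2,1]"
  unfolding closedR_def by (simp add: simple_eq refl8_def nbr_def, simp add: R_def)
lemma c115: "closedR [2,3,4,6,4,3,2,1]"
  unfolding closedR_def by (simp add: simple_eq refl8_def nbr_def, simp add: R_def)
lemma c116: "closedR [2,3,4,6,5,3,2,1]"
  unfolding closedR_def by (simp add: simple_eq refl8_def nbr_def, simp add: R_def)
lemma c117: "closedR [2,3,4,6,5,4,2,1]"
  unfolding closedR_def by (simp add: simple_eq refl8_def nbr_def, simp add: R_def)
lemma c118: "closedR [2,3,4,6,5,4,3,1]"
  unfolding closedR_def by (simp add: simple_eq refl8_def nbr_def, simp add: R_def)
lemma c119: "closedR [2,3,4,6,5,4,3,2]"
  unfolding closedR_def by (simp add: simple_eq refl8_def nbr_def, simp add: R_def)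

lemma R_pos_all: "list_all e8_pos_root R"
  by (simp add: R_def p0 p1 p2 p3 p4 p5 p6 p7 p8 p9 p10 p11 p12 p13 p14 p15 p16 p17 p18 p19 p20 p21 p22 p23 p24 p25 p26 p27 p28 p29 p30 p31 p32 p33 p34 p35 p36 p37 p38 p39 p40 p41 p42 p43 p44 p45 p46 p47 p48 p49 p50 p51 p52 p53 p54 p55 p56 p57 p58 p59 p60 p61 p62 p63 p64 p65 p66 p67 p68 p69 p70 p71 p72 p73 p74 p75 p76 p77 p78 p79 p80 p81 p82 p83 p84 p85 p86 p87 p88 p89 p90 p91 p92 p93 p94 p95 p96 p97 p98 p99 p100 p101 p102 p103 p104 p105 p106 p107 p108 p109 p110 p111 p112 p113 p114 p115 p116 p117 p118 p119)

lemma R_closed_all: "list_all closedR R"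
  by (simp add: R_def c0 c1 c2 c3 c4 c5 c6 c7 c8 c9 c10 c11 c12 c13 c14 c15 c16 c17 c18 c19 c20 c21 c22 c23 c24 c25 c26 c27 c28 c29 c30 c31 c32 c33 c34 c35 c36 c37 c38 c39 c40 c41 c42 c43 c44 c45 c46 c47 c48 c49 c50 c51 c52 c53 c54 c55 c56 c57 c58 c59 c60 c61 c62 c63 c64 c65 c66 c67 c68 c69 c70 c71 c72 c73 c74 c75 c76 c77 c78 c79 c80 c81 c82 c83 c84 c85 c86 c87 c88 c89 c90 c91 c92 c93 c94 c95 c96 c97 c98 c99 c100 c101 c102 c103 c104 c105 c106 c107 c108 c109 c110 c111 c112 c113 c114 c115 c116 c117 c118 c119)

lemma R_len_all: "list_all (\<lambda>a. length a = 8 \<and> list_all (\<lambda>x. x \<ge> 0) a) R"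
  by (simp add: R_def)

lemma R_pos: "a \<in> set R \<Longrightarrow> e8_pos_root a"
  using R_pos_all by (simp add: list_all_iff)

lemma R_len: "a \<in> set R \<Longrightarrow> length a = 8"
  using R_len_all by (simp add: list_all_iff)

lemma R_nonneg: "a \<in> set R \<Longrightarrow> i < 8 \<Longrightarrow> a ! i \<ge> 0"
  using R_len_all by (auto simp: list_all_iff)

lemma R_closed: "a \<in> set R \<Longrightarrow> closedR a"
  using R_closed_all by (simp add: list_all_iff)

lemma l8_cases: "(l::nat) \<in> {1..8} \<Longrightarrow> l = 1 \<or> l = 2 \<or> l = 3 \<or> l = 4 \<or> l = 5 \<or> l = 6 \<or> l = 7 \<or> l = 8"
  by auto

lemma pos_R: "e8_pos_root a \<Longrightarrow> a \<in> set R"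
proof (induction rule: e8_pos_root.induct)
  case (simple l)
  from l8_cases[OF this] show ?case
    by (elim disjE) (simp_all add: simple_eq R_def)
next
  case (refl a l)
  have len: "length a = 8" using R_len[OF refl.IH] .
  have eq: "e8_refl l a = refl8 l a" using refl8_eq[OF len refl.hyps(2)] .
  have c: "closedR a" using R_closed[OF refl.IH] .
  from l8_cases[OF refl.hyps(2)] show ?case unfolding eq
    using c refl.hyps(3) by (elim disjE) (simp_all add: closedR_def)
qed

lemma pos_iff: "e8_pos_root a \<longleftrightarrow> a \<in> set R"
  using pos_R R_pos by blast

lemma roots_eq: "e8_roots = set R \<union> map uminus ` set R"
  unfolding e8_roots_def using pos_iff by auto

lemma distinct_R: "distinct R"
  by (simp add: R_def)

lemma count_neg:
  assumes k: "k \<in> {1..8}" and m: "m > 0"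
  shows "grading_dim {k} (-m) = length (filter (\<lambda>b. b ! (k-1) = m) R)"
proof -
  have "{a \<in> e8_roots. ht {k} a = -m} = map uminus ` {b \<in> set R. b ! (k-1) = m}"
  proof (rule set_eqI, rule iffI)
    fix a assume "a \<in> {a \<in> e8_roots. ht {k} a = -m}"
    then have a: "a \<in> set R \<union> map uminus ` set R" "a ! (k-1) = -m"
      by (auto simp: roots_eq ht_def)
    show "a \<in> map uminus ` {b \<in> set R. b ! (k-1) = m}"
    proof (cases "a \<in> set R")
      case True
      then have "a ! (k-1) \<ge> 0" using R_nonneg k by auto
      then show ?thesis using a m by auto
    next
      case False
      then obtain b where b: "b \<in> set R" "a = map uminus b" using a by auto
      have "k - 1 < length b" using R_len[OF b(1)] k by auto
      then have "b ! (k-1) = m" using a(2) b by auto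
      then show ?thesis using b by auto
    qed
  next
    fix a assume "a \<in> map uminus ` {b \<in> set R. b ! (k-1) = m}"
    then obtain b where b: "b \<in> set R" "b ! (k-1) = m" "a = map uminus b" by auto
    have "k - 1 < length b" using R_len[OF b(1)] k by auto
    then show "a \<in> {a \<in> e8_roots. ht {k} a = -m}"
      using b by (auto simp: roots_eq ht_def)
  qed
  moreover have inj: "inj (map (uminus :: int \<Rightarrow> int))"
    by (rule inj_mapI) (simp add: inj_on_def)
  ultimately have "grading_dim {k} (-m) = card {b \<in> set R. b ! (k-1) = m}"
    unfolding grading_dim_def by (simp add: card_image[OF inj_on_subset[OF inj subset_UNIV]])
  also have "\<dots> = length (filter (\<lambda>b. b ! (k-1) = m) R)"
    using distinct_R by (simp add: distinct_card[symmetric] set_filter)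
  finally show ?thesis .
qed

lemma grading_set: "{\<Sigma>. is_3_grading \<Sigma>} = {{2}, {7}}"
proof (rule set_eqI, rule iffI)
  fix S assume "S \<in> {\<Sigma>. is_3_grading \<Sigma>}"
  then have S: "S \<subseteq> {1..8}" and h: "(\<Sum>l\<in>S. e8_highest_root ! (l - 1)) = 3"
    by (auto simp: is_3_grading_def ht_def)
  have fin: "finite S" using S finite_subset by blast
  have ge2: "\<forall>l\<in>S. 2 \<le> e8_highest_root ! (l - 1)"
  proof
    fix l assume "l \<in> S"
    then have "l \<in> {1..8}" using S by auto
    from l8_cases[OF this] show "2 \<le> e8_highest_root ! (l - 1)"
      by (elim disjE) (simp_all add: e8_highest_root_def)
  qed
  have "of_nat (card S) * 2 \<le> (\<Sum>l\<in>S. e8_highest_root ! (l - 1))"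
    using sum_bounded_below[of S 2 "\<lambda>l. e8_highest_root ! (l - 1)"] ge2 by auto
  then have "card S \<le> 1" using h by auto
  moreover have "card S \<noteq> 0" using fin h by auto
  ultimately have "card S = 1" by auto
  then obtain l where Sl: "S = {l}" by (auto simp: card_Suc_eq)
  then have l1: "l \<in> {1..8}" and l2: "e8_highest_root ! (l - 1) = 3" using S h by auto
  from l8_cases[OF l1] have "l = 2 \<or> l = 7"
    using l2 by (elim disjE) (auto simp: e8_highest_root_def)
  then show "S \<in> {{2}, {7}}" using Sl by auto
next
  fix S assume "S \<in> {{2::nat}, {7}}"
  then show "S \<in> {\<Sigma>. is_3_grading \<Sigma>}"
    by (auto simp: is_3_grading_def ht_def e8_highest_root_def)
qed

theorem proposition2p10:
  shows "{\<Sigma>. is_3_grading \<Sigma>} = {{2}, {7}}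
    \<and> grading_dim {2} (-3) = 8 \<and> grading_dim {2} (-2) = 28 \<and> grading_dim {2} (-1) = 56
    \<and> grading_dim {7} (-3) = 2 \<and> grading_dim {7} (-2) = 27 \<and> grading_dim {7} (-1) = 54"
proof -
  have a: "grading_dim {2} (-3) = 8" using count_neg[of 2 3] by (simp add: R_def)
  have b: "grading_dim {2} (-2) = 28" using count_neg[of 2 2] by (simp add: R_def)
  have c: "grading_dim {2} (-1) = 56" using count_neg[of 2 1] by (simp add: R_def)
  have d: "grading_dim {7} (-3) = 2" using count_neg[of 7 3] by (simp add: R_def)
  have e: "grading_dim {7} (-2) = 27" using count_neg[of 7 2] by (simp add: R_def)
  have f: "grading_dim {7} (-1) = 54" using count_neg[of 7 1] by (simp add: R_def)
  show ?thesis using grading_set a b c d e f by blast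
qed

end
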